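(* Let $p\in[1,\infty]$, let $(U_u)_{u\in[0,T]}$ be concave non-decreasing functions $U_u:\mathbb{R}\to[-\infty,+\infty)$ (not identically $-\infty$), and $(B_{tu})_{0\le t\le u\le T}$ real numbers, and let $(\rho^{U,B}_{tu})_{t,u}$ be the associated fully-dynamic shortfall risk measure. If for all $0\le t\le u\le v\le T$ and all $x\in\mathbb{R}$ one has $U_v(x)-B_{tv}\le U_u(x)-B_{tu}$, then $(\rho^{U,B}_{tu})$ satisfies h-longevity: $\rho^{U,B}_{tv}(X)\ge\rho^{U,B}_{tu}(X)$ for all $t\le u\le v$ and $X\in L^p(\mathcal{F}_u)$. If moreover $U_u$ and $B_{tu}$ do not depend on $u$, then $(\rho^{U,B}_{tu})$ satisfies the restriction property $\rho^{U,B}_{tu}(X)=\rho^{U,B}_{tv}(X)$ for all $t\le u\le v$, $X\in L^p(\mathcal{F}_u)$.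
   Context: $(\mathcal{F}_t)_{t\in[0,T]}$ is a filtration on a probability space $(\Omega,\mathcal{F},P)$. The fully-dynamic shortfall risk measure is $$\rho^{U,B}_{tu}(X)=\operatorname{ess.inf}\{m_t\in L^p(\mathcal{F}_t):E[U_u(X+m_t)\mid\mathcal{F}_t]\ge B_{tu}\},\qquad X\in L^p(\mathcal{F}_u),$$ with $\operatorname{ess.inf}\emptyset=+\infty$; conditional expectations are taken in the extended sense in $[-\infty,\infty)$ (the positive part is integrable since a concave function has an affine majorant). *)

theory Defs
  imports "HOL-Probability.Probability"
begin

definition memLp :: "'a measure \<Rightarrow> 'a measure \<Rightarrow> ennreal \<Rightarrow> ('a \<Rightarrow> real) \<Rightarrow> bool" where
  "memLp M G p f \<longleftrightarrow> f \<in> borel_measurable G \<and>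
     (if p = \<infinity> then (\<exists>C. AE x in M. \<bar>f x\<bar> \<le> C)
      else (\<integral>\<^sup>+ x. ennreal (\<bar>f x\<bar> powr enn2real p) \<partial>M) < \<infinity>)"

definition ext_cond_exp :: "'a measure \<Rightarrow> 'a measure \<Rightarrow> ('a \<Rightarrow> ereal) \<Rightarrow> 'a \<Rightarrow> ereal" where
  "ext_cond_exp M G Y = (\<lambda>x. enn2ereal (nn_cond_exp M G (\<lambda>y. e2ennreal (Y y)) x)
                            - enn2ereal (nn_cond_exp M G (\<lambda>y. e2ennreal (- Y y)) x))"

definition is_ess_inf :: "'a measure \<Rightarrow> 'a measure \<Rightarrow> ('a \<Rightarrow> ereal) set \<Rightarrow> ('a \<Rightarrow> ereal) \<Rightarrow> bool" where
  "is_ess_inf M G S Z \<longleftrightarrow> Z \<in> borel_measurable G \<and>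
     (\<forall>f\<in>S. AE x in M. Z x \<le> f x) \<and>
     (\<forall>Z'\<in>borel_measurable G. (\<forall>f\<in>S. AE x in M. Z' x \<le> f x) \<longrightarrow> (AE x in M. Z' x \<le> Z x))"

definition ess_inf_rv :: "'a measure \<Rightarrow> 'a measure \<Rightarrow> ('a \<Rightarrow> ereal) set \<Rightarrow> ('a \<Rightarrow> ereal)" where
  "ess_inf_rv M G S = (SOME Z. is_ess_inf M G S Z)"

definition shortfall_rm ::
  "'a measure \<Rightarrow> (real \<Rightarrow> 'a measure) \<Rightarrow> ennreal \<Rightarrow> (real \<Rightarrow> real \<Rightarrow> ereal) \<Rightarrow> (real \<Rightarrow> real \<Rightarrow> real)
    \<Rightarrow> real \<Rightarrow> real \<Rightarrow> ('a \<Rightarrow> real) \<Rightarrow> ('a \<Rightarrow> ereal)" where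
  "shortfall_rm M F p U B t u X =
     ess_inf_rv M (F t)
       ((\<lambda>m x. ereal (m x)) `
         {m. memLp M (F t) p m \<and>
             (AE x in M. ext_cond_exp M (F t) (\<lambda>y. U u (X y + m y)) x \<ge> ereal (B t u))})"

definition concave_ereal :: "(real \<Rightarrow> ereal) \<Rightarrow> bool" where
  "concave_ereal f \<longleftrightarrow> (\<forall>x y (l::real). 0 \<le> l \<and> l \<le> 1 \<longrightarrow>
      ereal l * f x + ereal (1 - l) * f y \<le> f (l * x + (1 - l) * y))"

end

theory Submission
  imports Defs
begin

lemma enn_max: "ennreal (max x 0) = ennreal x"
  by (cases "x \<ge> 0") (auto simp: ennreal_neg max_def)

lemma enn2: "ennreal x + ennreal y = ennreal (max x 0 + max y 0)"
  by (subst ennreal_plus) (auto simp: enn_max)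

lemma enn3: "ennreal x + ennreal y + ennreal z = ennreal (max x 0 + max y 0 + max z 0)"
  by (subst ennreal_plus; (subst ennreal_plus)?) (auto simp: enn_max)

lemma ptw1:
  fixes y1 y2 :: ereal and a b :: real
  assumes a: "0 \<le> a" and b: "0 \<le> b" and h: "y2 + ereal (a - b) \<le> y1"
  shows "e2ennreal y2 + e2ennreal (-y1) + ennreal a \<le> e2ennreal y1 + e2ennreal (-y2) + ennreal b
    \<and> e2ennreal y2 \<le> e2ennreal y1 + ennreal b
    \<and> e2ennreal (-y1) \<le> e2ennreal (-y2) + ennreal b"
proof (cases y2)
  case (real r2)
  show ?thesis
  proof (cases y1)
    case (real r1)
    then have "r2 + (a - b) \<le> r1" using h \<open>y2 = ereal r2\<close> by simp
    then have r: "max r2 0 + max (-r1) 0 + max a 0 \<le> max r1 0 + max (-r2) 0 + max b 0"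
      "max r2 0 \<le> max r1 0 + max b 0" "max (-r1) 0 \<le> max (-r2) 0 + max b 0"
      using a b by auto
    have e: "e2ennreal y1 = ennreal r1" "e2ennreal y2 = ennreal r2"
      "e2ennreal (-y1) = ennreal (-r1)" "e2ennreal (-y2) = ennreal (-r2)"
      using real \<open>y2 = ereal r2\<close> by (simp_all add: e2ennreal_ereal)
    show ?thesis unfolding e
      apply (intro conjI)
        apply (subst (1 2) enn3, rule ennreal_leI, rule r)
       apply (subst enn2, subst enn_max[symmetric], rule ennreal_leI, use r in simp)
      apply (subst enn2, subst enn_max[symmetric], rule ennreal_leI, use r in simp)
      done
  next
    case PInf then show ?thesis by (simp add: e2ennreal_neg)
  next
    case MInf then show ?thesis using h \<open>y2 = ereal r2\<close> by simp
  qed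
next
  case PInf
  then have "y1 = \<infinity>" using h by auto
  then show ?thesis using PInf by (simp add: e2ennreal_neg)
next
  case MInf
  then show ?thesis by (simp add: e2ennreal_neg)
qed

lemma enn_step:
  fixes p1 n1 p2 n2 :: ennreal and a b :: real
  assumes a: "0 \<le> a" and b: "0 \<le> b" and
    h1: "p2 + n1 + ennreal a \<le> p1 + n2 + ennreal b" and
    h2: "p2 \<le> p1 + ennreal b" and h3: "n1 \<le> n2 + ennreal b"
  shows "enn2ereal p2 - enn2ereal n2 + ereal (a - b) \<le> enn2ereal p1 - enn2ereal n1"
proof (cases p1 rule: ennreal_cases)
  case top
  then show ?thesis by simp
next
  case (real r1)
  with h2 obtain r2 where p2: "p2 = ennreal r2" "0 \<le> r2"
    by (cases p2 rule: ennreal_cases) (use b in \<open>auto simp flip: ennreal_plus simp: top_unique\<close>)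
  show ?thesis
  proof (cases n2 rule: ennreal_cases)
    case top
    then show ?thesis using p2 by simp
  next
    case (real s2)
    with h3 obtain s1 where n1: "n1 = ennreal s1" "0 \<le> s1"
      by (cases n1 rule: ennreal_cases) (use b in \<open>auto simp flip: ennreal_plus simp: top_unique\<close>)
    have "r2 + s1 + a \<le> r1 + s2 + b"
      using h1 p2 n1 real \<open>p1 = ennreal r1\<close> \<open>0 \<le> r1\<close> a b
      by (simp flip: ennreal_plus add: ennreal_le_iff)
    then show ?thesis using p2 n1 real \<open>p1 = ennreal r1\<close> \<open>0 \<le> r1\<close> by simp
  qed
qed

lemma ext_cond_exp_shift:
  assumes sf: "sigma_finite_subalgebra M G"
    and m1[measurable]: "Y1 \<in> borel_measurable M" and m2[measurable]: "Y2 \<in> borel_measurable M"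
    and le: "\<And>y. Y2 y + ereal c \<le> Y1 y"
  shows "AE x in M. ext_cond_exp M G Y2 x + ereal c \<le> ext_cond_exp M G Y1 x"
proof -
  interpret sigma_finite_subalgebra M G by (rule sf)
  define a where "a = max c 0"
  define b where "b = max (-c) 0"
  have a: "0 \<le> a" and b: "0 \<le> b" and cab: "c = a - b" unfolding a_def b_def by auto
  define P1 where "P1 = (\<lambda>y. e2ennreal (Y1 y))"
  define P2 where "P2 = (\<lambda>y. e2ennreal (Y2 y))"
  define N1 where "N1 = (\<lambda>y. e2ennreal (- Y1 y))"
  define N2 where "N2 = (\<lambda>y. e2ennreal (- Y2 y))"
  have [measurable]: "P1 \<in> borel_measurable M" "P2 \<in> borel_measurable M"
    "N1 \<in> borel_measurable M" "N2 \<in> borel_measurable M"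
    unfolding P1_def P2_def N1_def N2_def by measurable
  have pw: "P2 y + N1 y + ennreal a \<le> P1 y + N2 y + ennreal b \<and> P2 y \<le> P1 y + ennreal b
       \<and> N1 y \<le> N2 y + ennreal b" for y
    unfolding P1_def P2_def N1_def N2_def using ptw1[OF a b, of "Y2 y" "Y1 y"] le[of y] cab by simp
  have ca: "AE x in M. nn_cond_exp M G (\<lambda>y. ennreal a) x = ennreal a"
    using nn_cond_exp_F_meas[of "\<lambda>y. ennreal a"] by auto
  have cb: "AE x in M. nn_cond_exp M G (\<lambda>y. ennreal b) x = ennreal b"
    using nn_cond_exp_F_meas[of "\<lambda>y. ennreal b"] by auto
  have s1: "AE x in M. nn_cond_exp M G P2 x + nn_cond_exp M G N1 x = nn_cond_exp M G (\<lambda>y. P2 y + N1 y) x"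
    by (rule nn_cond_exp_sum) auto
  have s2: "AE x in M. nn_cond_exp M G (\<lambda>y. P2 y + N1 y) x + nn_cond_exp M G (\<lambda>y. ennreal a) x
      = nn_cond_exp M G (\<lambda>y. P2 y + N1 y + ennreal a) x"
    by (rule nn_cond_exp_sum) auto
  have s3: "AE x in M. nn_cond_exp M G P1 x + nn_cond_exp M G N2 x = nn_cond_exp M G (\<lambda>y. P1 y + N2 y) x"
    by (rule nn_cond_exp_sum) auto
  have s4: "AE x in M. nn_cond_exp M G (\<lambda>y. P1 y + N2 y) x + nn_cond_exp M G (\<lambda>y. ennreal b) x
      = nn_cond_exp M G (\<lambda>y. P1 y + N2 y + ennreal b) x"
    by (rule nn_cond_exp_sum) auto
  have s5: "AE x in M. nn_cond_exp M G P1 x + nn_cond_exp M G (\<lambda>y. ennreal b) x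
      = nn_cond_exp M G (\<lambda>y. P1 y + ennreal b) x"
    by (rule nn_cond_exp_sum) auto
  have s6: "AE x in M. nn_cond_exp M G N2 x + nn_cond_exp M G (\<lambda>y. ennreal b) x
      = nn_cond_exp M G (\<lambda>y. N2 y + ennreal b) x"
    by (rule nn_cond_exp_sum) auto
  have m1: "AE x in M. nn_cond_exp M G (\<lambda>y. P2 y + N1 y + ennreal a) x \<le> nn_cond_exp M G (\<lambda>y. P1 y + N2 y + ennreal b) x"
    by (rule nn_cond_exp_mono) (use pw in auto)
  have m2: "AE x in M. nn_cond_exp M G P2 x \<le> nn_cond_exp M G (\<lambda>y. P1 y + ennreal b) x"
    by (rule nn_cond_exp_mono) (use pw in auto)
  have m3: "AE x in M. nn_cond_exp M G N1 x \<le> nn_cond_exp M G (\<lambda>y. N2 y + ennreal b) x"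
    by (rule nn_cond_exp_mono) (use pw in auto)
  show ?thesis
    using ca cb s1 s2 s3 s4 s5 s6 m1 m2 m3
  proof eventually_elim
    case (elim x)
    show ?case
      unfolding ext_cond_exp_def cab
      apply (fold P1_def P2_def N1_def N2_def)
      apply (rule enn_step[OF a b])
      using elim by (auto simp: add.assoc)
  qed
qed

definition hh :: "ereal \<Rightarrow> real" where
  "hh x = (if x = \<infinity> then pi/2 else if x = -\<infinity> then -pi/2 else arctan (real_of_ereal x))"

lemma hh_meas[measurable]: "hh \<in> borel_measurable borel"
  unfolding hh_def by measurable

lemma hh_strict: "x < y \<Longrightarrow> hh x < hh y"
  using arctan_ubound[of "real_of_ereal x"] arctan_lbound[of "real_of_ereal y"]
  by (cases x; cases y) (auto simp: hh_def arctan_less_iff)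

lemma hh_mono: "x \<le> y \<Longrightarrow> hh x \<le> hh y"
  using hh_strict[of x y] by (cases "x = y") (auto simp: less_le)

lemma hh_inj: "hh x = hh y \<Longrightarrow> x = y"
  using hh_strict[of x y] hh_strict[of y x] by (cases x y rule: linorder_cases) auto

lemma hh_bound: "\<bar>hh x\<bar> \<le> pi/2"
  unfolding hh_def using arctan_lbound[of "real_of_ereal x"] arctan_ubound[of "real_of_ereal x"] by auto

lemma less_all_inv_le: "(\<And>n::nat. (x::real) < a + 1 / Suc n) \<Longrightarrow> x \<le> a"
proof (rule ccontr)
  assume h: "\<And>n::nat. x < a + 1 / Suc n" and "\<not> x \<le> a"
  then have "0 < x - a" by simp
  then obtain n where "inverse (real (Suc n)) < x - a" using reals_Archimedean by blast
  with h[of n] show False by (simp add: field_simps)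
qed

lemma ess_inf_exists:
  assumes P: "prob_space M" and sub: "subalgebra M G" and SG: "S \<subseteq> borel_measurable G"
  shows "\<exists>Z. is_ess_inf M G S Z"
proof -
  interpret prob_space M by (rule P)
  define g where "g C = (\<lambda>x. INF f\<in>C. (f x :: ereal))" for C :: "('a \<Rightarrow> ereal) set"
  define J where "J C = (\<integral>x. hh (g C x) \<partial>M)" for C
  define A where "A = {C. countable C \<and> C \<subseteq> S}"
  have gm: "g C \<in> borel_measurable G" if "C \<in> A" for C
    using that SG unfolding A_def g_def by (intro borel_measurable_INF) auto
  have gmM: "g C \<in> borel_measurable M" if "C \<in> A" for C
    using measurable_from_subalg[OF sub gm[OF that]] .
  have int: "integrable M (\<lambda>x. hh (g C x))" if "C \<in> A" for C
    by (rule integrable_const_bound[where B="pi/2"]) (use gmM[OF that] hh_bound in auto)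
  have hb: "- (pi/2) \<le> hh y" for y using hh_bound[of y] by linarith
  have Jlb: "- (pi/2) \<le> J C" if "C \<in> A" for C
  proof -
    have "(\<integral>x. - (pi/2) \<partial>M) \<le> J C" unfolding J_def
      by (rule integral_mono) (use int[OF that] hb in auto)
    then show ?thesis by (simp add: prob_space)
  qed
  define \<alpha> where "\<alpha> = Inf (J ` A)"
  have A0: "{} \<in> A" unfolding A_def by auto
  have bdd: "bdd_below (J ` A)" unfolding bdd_below_def using Jlb by blast
  have "\<exists>C. C \<in> A \<and> J C < \<alpha> + 1 / Suc n" for n :: nat
  proof -
    have "Inf (J ` A) < \<alpha> + 1 / Suc n" unfolding \<alpha>_def by simp
    from cInf_lessD[OF _ this] A0 show ?thesis by blast
  qed
  then obtain Cs where Cs: "\<And>n. Cs n \<in> A" "\<And>n. J (Cs n) < \<alpha> + 1 / Suc n" by metis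
  define C where "C = (\<Union>n. Cs n)"
  have CA: "C \<in> A" using Cs(1) unfolding C_def A_def by auto
  have JCn: "J C \<le> J (Cs n)" for n unfolding J_def
  proof (rule integral_mono[OF int[OF CA] int[OF Cs(1)]])
    fix x show "hh (g C x) \<le> hh (g (Cs n) x)"
      unfolding g_def C_def by (rule hh_mono, rule INF_superset_mono) auto
  qed
  then have "J C < \<alpha> + 1 / Suc n" for n using Cs(2)[of n] JCn[of n] by linarith
  then have "J C \<le> \<alpha>" by (rule less_all_inv_le)
  moreover have "\<alpha> \<le> J C" unfolding \<alpha>_def using CA bdd by (auto intro: cInf_lower)
  ultimately have JC: "J C = \<alpha>" by simp
  define Z where "Z = g C"
  have "is_ess_inf M G S Z"
    unfolding is_ess_inf_def
  proof (intro conjI ballI impI)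
    show "Z \<in> borel_measurable G" unfolding Z_def by (rule gm[OF CA])
  next
    fix f assume fS: "f \<in> S"
    define C' where "C' = insert f C"
    have C'A: "C' \<in> A" using CA fS unfolding C'_def A_def by auto
    have gC': "g C' x = min (f x) (Z x)" for x
      unfolding C'_def Z_def g_def by (simp add: inf_min)
    have "\<alpha> \<le> J C'" unfolding \<alpha>_def using C'A bdd by (auto intro: cInf_lower)
    have le: "hh (g C' x) \<le> hh (Z x)" for x unfolding gC' by (rule hh_mono) simp
    have "(\<integral>x. hh (Z x) - hh (g C' x) \<partial>M) = J C - J C'"
      unfolding J_def Z_def by (rule Bochner_Integration.integral_diff[OF int[OF CA] int[OF C'A]])
    also have "\<dots> \<le> 0" using JC \<open>\<alpha> \<le> J C'\<close> by simp
    finally have i0: "(\<integral>x. hh (Z x) - hh (g C' x) \<partial>M) = 0"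
      using integral_nonneg_AE[of "\<lambda>x. hh (Z x) - hh (g C' x)" M] le by fastforce
    have "AE x in M. hh (Z x) - hh (g C' x) = 0"
      using integral_nonneg_eq_0_iff_AE[of M "\<lambda>x. hh (Z x) - hh (g C' x)"] i0 le
        Bochner_Integration.integrable_diff[OF int[OF CA] int[OF C'A]]
      unfolding Z_def by auto
    then show "AE x in M. Z x \<le> f x"
    proof eventually_elim
      case (elim x)
      then have "g C' x = Z x" using hh_inj by auto
      then show ?case unfolding gC' by (simp add: min_def split: if_splits)
    qed
  next
    fix Z' :: "'a \<Rightarrow> ereal" assume "Z' \<in> borel_measurable G" and lb: "\<forall>f\<in>S. AE x in M. Z' x \<le> f x"
    have "countable C" using CA unfolding A_def by auto
    moreover have "C \<subseteq> S" using CA unfolding A_def by auto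
    ultimately have "AE x in M. \<forall>f\<in>C. Z' x \<le> f x"
      using lb by (subst AE_ball_countable) auto
    then show "AE x in M. Z' x \<le> Z x"
      by eventually_elim (simp add: Z_def g_def le_INF_iff)
  qed
  then show ?thesis by blast
qed


lemma ess_inf_anti:
  assumes P: "prob_space M" and sub: "subalgebra M G" and SS: "S' \<subseteq> S" and SG: "S \<subseteq> borel_measurable G"
  shows "AE x in M. ess_inf_rv M G S x \<le> ess_inf_rv M G S' x"
proof -
  have e1: "is_ess_inf M G S (ess_inf_rv M G S)"
    unfolding ess_inf_rv_def by (rule someI_ex[OF ess_inf_exists[OF P sub SG]])
  have SG': "S' \<subseteq> borel_measurable G" using SS SG by (rule order_trans)
  have e2: "is_ess_inf M G S' (ess_inf_rv M G S')"
    unfolding ess_inf_rv_def by (rule someI_ex[OF ess_inf_exists[OF P sub SG']])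
  have m: "ess_inf_rv M G S \<in> borel_measurable G" and lb: "\<forall>f\<in>S. AE x in M. ess_inf_rv M G S x \<le> f x"
    using e1 unfolding is_ess_inf_def by auto
  have gr: "\<And>Z'. Z' \<in> borel_measurable G \<Longrightarrow> (\<forall>f\<in>S'. AE x in M. Z' x \<le> f x) \<Longrightarrow> (AE x in M. Z' x \<le> ess_inf_rv M G S' x)"
    using e2 unfolding is_ess_inf_def by auto
  show ?thesis by (rule gr[OF m]) (use lb SS in blast)
qed

lemma mono_ereal_meas:
  fixes f :: "real \<Rightarrow> ereal" assumes "mono f" shows "f \<in> borel_measurable borel"
proof (rule borel_measurableI_le)
  fix y show "{x \<in> space borel. f x \<le> y} \<in> sets borel"
    unfolding space_borel
  proof (rule real_interval_borel_measurable, unfold is_interval_1, intro ballI allI impI)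
    fix a b x assume a: "a \<in> {x \<in> UNIV. f x \<le> y}" and b: "b \<in> {x \<in> UNIV. f x \<le> y}"
      and x: "a \<le> x \<and> x \<le> b"
    have "f x \<le> f b" using monoD[OF assms] x by blast
    also have "f b \<le> y" using b by simp
    finally show "x \<in> {x \<in> UNIV. f x \<le> y}" by simp
  qed
qed

lemma ereal_shift_aux:
  fixes a b :: ereal and c d :: real
  assumes "b - ereal d \<le> a - ereal c"
  shows "b + ereal (c - d) \<le> a"
  using assms by (cases a; cases b) auto

lemma ereal_shift_aux2:
  fixes e1 e2 :: ereal and c d :: real
  assumes "ereal d \<le> e2" "e2 + ereal (c - d) \<le> e1"
  shows "ereal c \<le> e1"
  using assms by (cases e1; cases e2) auto

theorem mainTheorem8:
  fixes M :: "'a measure" and F :: "real \<Rightarrow> 'a measure" and T :: real and p :: ennreal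
    and U :: "real \<Rightarrow> real \<Rightarrow> ereal" and B :: "real \<Rightarrow> real \<Rightarrow> real"
  assumes prob: "prob_space M"
    and T_nonneg: "0 \<le> T"
    and filt_sub: "\<And>t. 0 \<le> t \<Longrightarrow> t \<le> T \<Longrightarrow> subalgebra M (F t)"
    and filt_mono: "\<And>s t. 0 \<le> s \<Longrightarrow> s \<le> t \<Longrightarrow> t \<le> T \<Longrightarrow> sets (F s) \<subseteq> sets (F t)"
    and p_ge: "1 \<le> p"
    and U_conc: "\<And>u. 0 \<le> u \<Longrightarrow> u \<le> T \<Longrightarrow> concave_ereal (U u)"
    and U_mono: "\<And>u. 0 \<le> u \<Longrightarrow> u \<le> T \<Longrightarrow> mono (U u)"
    and U_lt_top: "\<And>u x. 0 \<le> u \<Longrightarrow> u \<le> T \<Longrightarrow> U u x < \<infinity>"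
    and U_not_bot: "\<And>u. 0 \<le> u \<Longrightarrow> u \<le> T \<Longrightarrow> \<exists>x. U u x \<noteq> -\<infinity>"
    and hyp: "\<And>t u v x. 0 \<le> t \<Longrightarrow> t \<le> u \<Longrightarrow> u \<le> v \<Longrightarrow> v \<le> T \<Longrightarrow>
                 U v x - ereal (B t v) \<le> U u x - ereal (B t u)"
  shows "(\<forall>t u v X. 0 \<le> t \<and> t \<le> u \<and> u \<le> v \<and> v \<le> T \<and> memLp M (F u) p X \<longrightarrow>
            (AE x in M. shortfall_rm M F p U B t v X x \<ge> shortfall_rm M F p U B t u X x))
       \<and> ((\<forall>u v. 0 \<le> u \<and> u \<le> T \<and> 0 \<le> v \<and> v \<le> T \<longrightarrow> U u = U v) \<and>
          (\<forall>t u v. 0 \<le> t \<and> t \<le> u \<and> u \<le> T \<and> t \<le> v \<and> v \<le> T \<longrightarrow> B t u = B t v)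
          \<longrightarrow> (\<forall>t u v X. 0 \<le> t \<and> t \<le> u \<and> u \<le> v \<and> v \<le> T \<and> memLp M (F u) p X \<longrightarrow>
            (AE x in M. shortfall_rm M F p U B t u X x = shortfall_rm M F p U B t v X x)))"
proof (intro conjI allI impI)
  fix t u v X
  assume tuv: "0 \<le> t \<and> t \<le> u \<and> u \<le> v \<and> v \<le> T \<and> memLp M (F u) p X"
  then have t0: "0 \<le> t" and tu: "t \<le> u" and uv: "u \<le> v" and vT: "v \<le> T" and XL: "memLp M (F u) p X"
    by auto
  have subt: "subalgebra M (F t)" using filt_sub t0 tu uv vT by auto
  have subu: "subalgebra M (F u)" using filt_sub t0 tu uv vT by auto
  have sf: "sigma_finite_subalgebra M (F t)"
    using prob subt
    by (auto intro!: finite_measure_subalgebra_is_sigma_finite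
        simp: finite_measure_subalgebra_def finite_measure_subalgebra_axioms_def prob_space_def)
  have Xm: "X \<in> borel_measurable M"
    using XL measurable_from_subalg[OF subu] unfolding memLp_def by blast
  have Um: "U w \<in> borel_measurable borel" if "0 \<le> w" "w \<le> T" for w
    using mono_ereal_meas U_mono that by blast
  define SS where "SS w = (\<lambda>m x. ereal (m x)) `
         {m. memLp M (F t) p m \<and>
             (AE x in M. ext_cond_exp M (F t) (\<lambda>y. U w (X y + m y)) x \<ge> ereal (B t w))}" for w
  have rm: "shortfall_rm M F p U B t w X = ess_inf_rv M (F t) (SS w)" for w
    unfolding shortfall_rm_def SS_def by simp
  have SG: "SS u \<subseteq> borel_measurable (F t)"
    unfolding SS_def memLp_def by auto
  have SSsub: "SS v \<subseteq> SS u"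
  proof
    fix f assume "f \<in> SS v"
    then obtain m where f: "f = (\<lambda>x. ereal (m x))" and mL: "memLp M (F t) p m"
      and mA: "AE x in M. ext_cond_exp M (F t) (\<lambda>y. U v (X y + m y)) x \<ge> ereal (B t v)"
      unfolding SS_def by auto
    have mm: "m \<in> borel_measurable M"
      using mL measurable_from_subalg[OF subt] unfolding memLp_def by blast
    have Xmm: "(\<lambda>y. X y + m y) \<in> borel_measurable M" using Xm mm by measurable
    have Y1: "(\<lambda>y. U u (X y + m y)) \<in> borel_measurable M"
      using measurable_compose[OF Xmm Um[of u]] t0 tu uv vT by (simp add: comp_def)
    have Y2: "(\<lambda>y. U v (X y + m y)) \<in> borel_measurable M"
      using measurable_compose[OF Xmm Um[of v]] t0 tu uv vT by (simp add: comp_def)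
    have "AE x in M. ext_cond_exp M (F t) (\<lambda>y. U v (X y + m y)) x + ereal (B t u - B t v)
        \<le> ext_cond_exp M (F t) (\<lambda>y. U u (X y + m y)) x"
      by (rule ext_cond_exp_shift[OF sf Y1 Y2])
         (rule ereal_shift_aux, rule hyp, use t0 tu uv vT in auto)
    with mA have "AE x in M. ext_cond_exp M (F t) (\<lambda>y. U u (X y + m y)) x \<ge> ereal (B t u)"
      by eventually_elim (rule ereal_shift_aux2)
    then show "f \<in> SS u" unfolding SS_def f using mL by auto
  qed
  show "AE x in M. shortfall_rm M F p U B t v X x \<ge> shortfall_rm M F p U B t u X x"
    unfolding rm using ess_inf_anti[OF prob subt SSsub SG] by simp
next
  fix t u v X
  assume H: "(\<forall>u v. 0 \<le> u \<and> u \<le> T \<and> 0 \<le> v \<and> v \<le> T \<longrightarrow> U u = U v) \<and>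
          (\<forall>t u v. 0 \<le> t \<and> t \<le> u \<and> u \<le> T \<and> t \<le> v \<and> v \<le> T \<longrightarrow> B t u = B t v)"
    and tuv: "0 \<le> t \<and> t \<le> u \<and> u \<le> v \<and> v \<le> T \<and> memLp M (F u) p X"
  then have "U u = U v" "B t u = B t v" by auto
  then have "shortfall_rm M F p U B t u X = shortfall_rm M F p U B t v X"
    unfolding shortfall_rm_def by simp
  then show "AE x in M. shortfall_rm M F p U B t u X x = shortfall_rm M F p U B t v X x" by simp
qed

end
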